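(* Let $p$ be a prime greater than $3$ and let $u$ be a positive integer coprime to $p$. Let $a_1,a_2,a_3,\alpha_1,\alpha_2,\alpha_3$ be positive integers. Assume that the ternary diagonal $\mathbb{Z}$-lattice $\langle a_1,a_2,a_3\rangle$ is isometric over $\mathbb{Z}_p$ to $\langle 1,-\Delta_p\rangle\perp\langle p\epsilon_p\rangle$ for some $\epsilon_p\in\mathbb{Z}_p^\times$. Then there is an integer $v$ such that (i) $0<v<p^2$; (ii) $uv+a_1\alpha_1^2+a_2\alpha_2^2$ is not represented by $\langle a_1,a_2\rangle$ over $\mathbb{Z}_p$; (iii) $uv+a_1\alpha_1^2+a_2\alpha_2^2+a_3\alpha_3^2$ is represented by $\langle a_1,a_2,a_3\rangle$ over $\mathbb{Z}_p$; (iv) $\max\bigl(\mathrm{ord}_p(uv+a_1\alpha_1^2+a_2\alpha_2^2),\ \mathrm{ord}_p(uv+a_1\alpha_1^2+a_2\alpha_2^2+a_3\alpha_3^2)\bigr)\le 1$.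
   Context: $\Delta_p$ denotes a nonsquare unit of $\mathbb{Z}_p$. $\langle b_1,\dots,b_k\rangle$ denotes the lattice with diagonal Gram matrix with entries $b_1,\dots,b_k$ (quadratic form $b_1x_1^2+\cdots+b_kx_k^2$). An element $n$ is represented by such a lattice over $\mathbb{Z}_p$ if $n=b_1x_1^2+\cdots+b_kx_k^2$ for some $x_i\in\mathbb{Z}_p$. *)

theory Defs
  imports "HOL-Number_Theory.Number_Theory"
begin

text \<open>p-adic integers are modelled as coherent sequences of residues:
 x k is the residue of x modulo p^k (0 \<le> x k < p^k), and x (k+1) reduces to x k.
 An identity between polynomial expressions in p-adic integers holds in Z_p
 iff it holds modulo p^k at every level k.\<close>

definition padic :: "int \<Rightarrow> (nat \<Rightarrow> int) \<Rightarrow> bool" where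
  "padic p x \<longleftrightarrow> (\<forall>k. 0 \<le> x k \<and> x k < p ^ k) \<and> (\<forall>k. x (Suc k) mod p ^ k = x k)"

definition padic_unit :: "int \<Rightarrow> (nat \<Rightarrow> int) \<Rightarrow> bool" where
  "padic_unit p x \<longleftrightarrow> padic p x \<and> \<not> p dvd x 1"

definition padic_square :: "int \<Rightarrow> (nat \<Rightarrow> int) \<Rightarrow> bool" where
  "padic_square p x \<longleftrightarrow> (\<exists>y. padic p y \<and> (\<forall>k. [y k ^ 2 = x k] (mod p ^ k)))"

definition nonsquare_unit :: "int \<Rightarrow> (nat \<Rightarrow> int) \<Rightarrow> bool" where
  "nonsquare_unit p x \<longleftrightarrow> padic_unit p x \<and> \<not> padic_square p x"

definition zp_represents :: "int \<Rightarrow> int list \<Rightarrow> int \<Rightarrow> bool" where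
  "zp_represents p bs n \<longleftrightarrow>
     (\<exists>xs. length xs = length bs \<and> (\<forall>x\<in>set xs. padic p x) \<and>
       (\<forall>k. [(\<Sum>i<length bs. bs ! i * (xs ! i) k ^ 2) = n] (mod p ^ k)))"

definition det3 :: "(nat \<Rightarrow> nat \<Rightarrow> int) \<Rightarrow> int" where
  "det3 M = M 0 0 * (M 1 1 * M 2 2 - M 1 2 * M 2 1)
          - M 0 1 * (M 1 0 * M 2 2 - M 1 2 * M 2 0)
          + M 0 2 * (M 1 0 * M 2 1 - M 1 1 * M 2 0)"

text \<open>Isometry over Z_p of ternary diagonal lattices <a 0, a 1, a 2> and <b 0, b 1, b 2>
 with p-adic coefficients: there is T in GL_3(Z_p) with T^t diag(a) T = diag(b).\<close>
definition zp_isometric3 :: "int \<Rightarrow> (nat \<Rightarrow> nat \<Rightarrow> int) \<Rightarrow> (nat \<Rightarrow> nat \<Rightarrow> int) \<Rightarrow> bool" where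
  "zp_isometric3 p a b \<longleftrightarrow>
     (\<exists>T :: nat \<Rightarrow> nat \<Rightarrow> nat \<Rightarrow> int.
        (\<forall>i<3. \<forall>j<3. padic p (T i j)) \<and>
        \<not> p dvd det3 (\<lambda>i j. T i j 1) \<and>
        (\<forall>i<3. \<forall>j<3. \<forall>k.
           [(\<Sum>l<3. T l i k * a l k * T l j k) = (if i = j then b i k else 0)] (mod p ^ k)))"

definition zp_of_int :: "int \<Rightarrow> int \<Rightarrow> nat \<Rightarrow> int" where
  "zp_of_int p n = (\<lambda>k. n mod p ^ k)"

end

theory Submission
  imports Defs
begin


definition liftP :: "int \<Rightarrow> int \<Rightarrow> (nat \<Rightarrow> int) \<Rightarrow> nat \<Rightarrow> int \<Rightarrow> int \<Rightarrow> bool" where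
  "liftP p b M k x x' \<longleftrightarrow> 0 \<le> x' \<and> x' < p ^ Suc k \<and> x' mod p ^ k = x \<and> [b * x'^2 = M (Suc k)] (mod p ^ Suc k)"

lemma hensel_step:
  fixes p b x :: int and M :: "nat \<Rightarrow> int"
  assumes p: "prime p" "odd p" and b: "\<not> p dvd b" and x: "\<not> p dvd x" and k: "k \<ge> 1"
    and cx: "[b * x^2 = M k] (mod p ^ k)" and cM: "[M (Suc k) = M k] (mod p ^ k)"
    and xr: "0 \<le> x" "x < p ^ k"
  shows "\<exists>x'. liftP p b M k x x'"
proof -
  have "p ^ k dvd M (Suc k) - b * x^2"
    using cx cM by (metis cong_iff_dvd_diff cong_sym cong_trans)
  then obtain s where s: "M (Suc k) - b * x^2 = p ^ k * s" by (auto elim: dvdE)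
  have "\<not> p dvd 2"
  proof
    assume "p dvd 2"
    hence "p \<le> 2" by (simp add: zdvd_imp_le)
    moreover have "p \<ge> 2" using p(1) by (simp add: prime_ge_2_int)
    ultimately have "p = 2" by simp
    thus False using p(2) by simp
  qed
  hence "\<not> p dvd (2 * b * x)" using p b x by (simp add: prime_dvd_mult_iff)
  hence "coprime (2*b*x) p" using p by (metis prime_imp_coprime coprime_commute)
  then obtain w where w: "[2*b*x * w = 1] (mod p)" using cong_solve_coprime_int by blast
  define t where "t = w * s"
  have ct: "[2*b*x*t = s] (mod p)" unfolding t_def
    using cong_scalar_right[OF w, of s] by (simp add: mult.assoc)
  then obtain q where q: "s - 2*b*x*t = p * q"
    by (metis cong_iff_dvd_diff cong_sym dvdE)
  define x1 where "x1 = x + t * p^k"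
  have pk: "p ^ Suc k dvd p^k * p^k" using k by (metis le_imp_power_dvd power_add add_le_mono1 plus_1_eq_Suc)
  have x1sq: "b * x1^2 = b * x^2 + p^k * (2*b*x*t) + b * t^2 * (p^k * p^k)"
    unfolding x1_def by (simp add: power2_eq_square algebra_simps)
  have e: "M (Suc k) - b * x1^2 = p ^ Suc k * q - b * t^2 * (p^k * p^k)"
  proof -
    have "M (Suc k) - b * x1^2 = p^k * (s - 2*b*x*t) - b * t^2 * (p^k * p^k)"
      using x1sq s by (simp add: algebra_simps)
    also have "\<dots> = p ^ Suc k * q - b * t^2 * (p^k * p^k)" using q by (simp add: algebra_simps)
    finally show ?thesis .
  qed
  have "p ^ Suc k dvd M (Suc k) - b * x1^2" unfolding e
    using pk by (intro dvd_diff) auto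
  hence c1: "[b * x1^2 = M (Suc k)] (mod p ^ Suc k)"
    by (metis cong_iff_dvd_diff cong_sym)
  define x' where "x' = x1 mod p ^ Suc k"
  have pp: "p > 0" using p prime_gt_0_int by blast
  have "[x' = x1] (mod p ^ Suc k)" unfolding x'_def by (simp add: cong_def)
  hence "[b * x'^2 = b * x1^2] (mod p ^ Suc k)" by (intro cong_mult cong_pow cong_refl)
  hence c2: "[b * x'^2 = M (Suc k)] (mod p ^ Suc k)" using c1 cong_trans by blast
  have "x' mod p ^ k = x1 mod p ^ k" unfolding x'_def
    by (simp add: mod_mod_cancel le_imp_power_dvd)
  also have "\<dots> = x mod p^k" unfolding x1_def by simp
  also have "\<dots> = x" using xr by simp
  finally have "x' mod p ^ k = x" .
  moreover have "0 \<le> x'" "x' < p ^ Suc k" unfolding x'_def using pp by simp_all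
  ultimately show ?thesis using c2 unfolding liftP_def by blast
qed

definition liftf :: "int \<Rightarrow> int \<Rightarrow> (nat \<Rightarrow> int) \<Rightarrow> nat \<Rightarrow> int \<Rightarrow> int" where
  "liftf p b M k x = (SOME x'. liftP p b M k x x')"

fun hseq :: "int \<Rightarrow> int \<Rightarrow> (nat \<Rightarrow> int) \<Rightarrow> int \<Rightarrow> nat \<Rightarrow> int" where
  "hseq p b M r 0 = 0"
| "hseq p b M r (Suc 0) = r mod p"
| "hseq p b M r (Suc (Suc k)) = liftf p b M (Suc k) (hseq p b M r (Suc k))"

lemma hensel:
  fixes p b r :: int and M :: "nat \<Rightarrow> int"
  assumes p: "prime p" "odd p" and b: "\<not> p dvd b" and r: "\<not> p dvd r"
    and c1: "[b * r^2 = M 1] (mod p)" and cM: "\<And>k. [M (Suc k) = M k] (mod p ^ k)"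
  shows "\<exists>y. padic p y \<and> (\<forall>k. [b * (y k)^2 = M k] (mod p ^ k))"
proof -
  define y where "y = hseq p b M r"
  have pp: "p > 0" using p prime_gt_0_int by blast
  have I: "0 \<le> y (Suc m) \<and> y (Suc m) < p ^ Suc m \<and> \<not> p dvd y (Suc m) \<and>
     [b * (y (Suc m))^2 = M (Suc m)] (mod p ^ Suc m)" for m
  proof (induction m)
    case 0
    have "[b * (r mod p)^2 = b * r^2] (mod p)"
      by (intro cong_mult cong_pow cong_refl) (simp add: cong_def)
    hence "[b * (r mod p)^2 = M 1] (mod p)" using c1 cong_trans by blast
    then show ?case using pp r by (simp add: y_def dvd_eq_mod_eq_0)
  next
    case (Suc m)
    have "\<exists>x'. liftP p b M (Suc m) (y (Suc m)) x'"
      using Suc p b by (intro hensel_step) (use cM[of "Suc m"] in auto)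
    hence L: "liftP p b M (Suc m) (y (Suc m)) (y (Suc (Suc m)))"
      unfolding y_def by (simp add: liftf_def someI_ex)
    hence md: "y (Suc (Suc m)) mod p ^ Suc m = y (Suc m)" unfolding liftP_def by blast
    have "\<not> p dvd y (Suc (Suc m))"
    proof
      assume "p dvd y (Suc (Suc m))"
      moreover have "p dvd p ^ Suc m" by simp
      ultimately have "p dvd y (Suc (Suc m)) mod p ^ Suc m" by (simp add: dvd_mod)
      thus False using md Suc by simp
    qed
    then show ?case using L unfolding liftP_def by blast
  qed
  have C: "y (Suc k) mod p ^ k = y k" for k
  proof (cases k)
    case 0 then show ?thesis by (simp add: y_def)
  next
    case (Suc m)
    have "\<exists>x'. liftP p b M (Suc m) (y (Suc m)) x'"
      using I[of m] p b by (intro hensel_step) (use cM[of "Suc m"] in auto)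
    hence L: "liftP p b M (Suc m) (y (Suc m)) (y (Suc (Suc m)))"
      unfolding y_def by (simp add: liftf_def someI_ex)
    then show ?thesis unfolding liftP_def Suc by blast
  qed
  have "padic p y" unfolding padic_def
  proof (intro conjI allI)
    fix k show "0 \<le> y k" using I[of "k - 1"] by (cases k) (auto simp: y_def)
    show "y k < p ^ k" using I[of "k - 1"] by (cases k) (auto simp: y_def)
    show "y (Suc k) mod p ^ k = y k" by (rule C)
  qed
  moreover have "[b * (y k)^2 = M k] (mod p ^ k)" for k
    using I[of "k - 1"] by (cases k) auto
  ultimately show ?thesis by blast
qed



lemma padic_cong: "padic p x \<Longrightarrow> [x (Suc k) = x k] (mod p ^ k)"
  unfolding padic_def cong_def by (metis mod_mod_trivial)

lemma padic_const: "p > 0 \<Longrightarrow> padic p (\<lambda>k. c mod p ^ k)"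
  unfolding padic_def by (simp add: mod_mod_cancel le_imp_power_dvd)

lemma padic_zero: "p > 0 \<Longrightarrow> padic p (\<lambda>k. 0)"
  unfolding padic_def by simp

lemma rep2_iff: "zp_represents p [a, b] n \<longleftrightarrow>
  (\<exists>x y. padic p x \<and> padic p y \<and> (\<forall>k. [a * (x k)^2 + b * (y k)^2 = n] (mod p ^ k)))"
proof
  assume "zp_represents p [a, b] n"
  then obtain xs where xs: "length xs = length [a,b]" "\<forall>x\<in>set xs. padic p x"
    "\<forall>k. [(\<Sum>i<length [a,b]. [a,b] ! i * (xs ! i) k ^ 2) = n] (mod p ^ k)"
    unfolding zp_represents_def by blast
  then obtain x y where "xs = [x, y]"
    by (metis (no_types, lifting) One_nat_def Suc_1 length_0_conv length_Suc_conv)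
  with xs show "\<exists>x y. padic p x \<and> padic p y \<and> (\<forall>k. [a * (x k)^2 + b * (y k)^2 = n] (mod p ^ k))"
    by (auto simp: eval_nat_numeral)
next
  assume "\<exists>x y. padic p x \<and> padic p y \<and> (\<forall>k. [a * (x k)^2 + b * (y k)^2 = n] (mod p ^ k))"
  then obtain x y where "padic p x" "padic p y" "\<forall>k. [a * (x k)^2 + b * (y k)^2 = n] (mod p ^ k)" by blast
  then show "zp_represents p [a, b] n" unfolding zp_represents_def
    by (intro exI[of _ "[x, y]"]) (auto simp: eval_nat_numeral)
qed

lemma rep3_iff: "zp_represents p [a, b, c] n \<longleftrightarrow>
  (\<exists>x y z. padic p x \<and> padic p y \<and> padic p z \<and>
     (\<forall>k. [a * (x k)^2 + b * (y k)^2 + c * (z k)^2 = n] (mod p ^ k)))"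
proof
  assume "zp_represents p [a, b, c] n"
  then obtain xs where xs: "length xs = length [a,b,c]" "\<forall>x\<in>set xs. padic p x"
    "\<forall>k. [(\<Sum>i<length [a,b,c]. [a,b,c] ! i * (xs ! i) k ^ 2) = n] (mod p ^ k)"
    unfolding zp_represents_def by blast
  then obtain x y z where "xs = [x, y, z]"
    by (metis (no_types, lifting) length_0_conv length_Suc_conv numeral_3_eq_3)
  with xs show "\<exists>x y z. padic p x \<and> padic p y \<and> padic p z \<and>
     (\<forall>k. [a * (x k)^2 + b * (y k)^2 + c * (z k)^2 = n] (mod p ^ k))"
    by (auto simp: eval_nat_numeral add.assoc)
next
  assume "\<exists>x y z. padic p x \<and> padic p y \<and> padic p z \<and>
     (\<forall>k. [a * (x k)^2 + b * (y k)^2 + c * (z k)^2 = n] (mod p ^ k))"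
  then obtain x y z where "padic p x" "padic p y" "padic p z"
     "\<forall>k. [a * (x k)^2 + b * (y k)^2 + c * (z k)^2 = n] (mod p ^ k)" by blast
  then show "zp_represents p [a, b, c] n" unfolding zp_represents_def
    by (intro exI[of _ "[x, y, z]"]) (auto simp: eval_nat_numeral add.assoc)
qed

lemma nsq:
  assumes p: "prime p" "odd p" and D: "nonsquare_unit p \<Delta>"
  shows "\<not> p dvd \<Delta> 1 \<and> (\<forall>r. \<not> [r^2 = \<Delta> 1] (mod p))"
proof -
  have u: "padic p \<Delta>" "\<not> p dvd \<Delta> 1" "\<not> padic_square p \<Delta>"
    using D unfolding nonsquare_unit_def padic_unit_def by auto
  have "\<not> [r^2 = \<Delta> 1] (mod p)" for r
  proof
    assume r: "[r^2 = \<Delta> 1] (mod p)"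
    have "\<not> p dvd r"
    proof
      assume "p dvd r"
      hence "p dvd r^2" by (simp add: power2_eq_square)
      hence "p dvd \<Delta> 1" using r cong_dvd_iff by blast
      thus False using u by simp
    qed
    have p1: "\<not> p dvd 1" using p(1) not_prime_unit by blast
    have r1: "[1 * r^2 = \<Delta> 1] (mod p)" using r by simp
    obtain y where "padic p y" "\<forall>k. [1 * (y k)^2 = \<Delta> k] (mod p ^ k)"
      using hensel[OF p p1 \<open>\<not> p dvd r\<close> r1 padic_cong[OF u(1)]] by blast
    hence "padic_square p \<Delta>" unfolding padic_square_def by auto
    thus False using u by simp
  qed
  thus ?thesis using u by simp
qed

lemma binary:
  fixes p a b n :: int
  assumes p: "prime p" "odd p" and a: "\<not> p dvd a" and b: "\<not> p dvd b"
  shows "\<exists>y z. [a * y^2 + b * z^2 = n] (mod p)"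
proof -
  define h where "h = (p - 1) div 2"
  have p2: "p = 2 * h + 1" using p(2) unfolding h_def by presburger
  have pg: "p \<ge> 2" using p prime_ge_2_int by blast
  hence h0: "h \<ge> 0" using p2 by simp
  define H where "H = {0..h}"
  define f where "f = (\<lambda>y. (a * y^2) mod p)"
  define g where "g = (\<lambda>z. (n - b * z^2) mod p)"
  have sq: "y1 = y2" if "y1 \<in> H" "y2 \<in> H" "p dvd c * (y1^2 - y2^2)" "\<not> p dvd c" for y1 y2 c
  proof -
    have "p dvd (y1^2 - y2^2)" using that(3,4) p(1) by (simp add: prime_dvd_mult_iff)
    moreover have "y1^2 - y2^2 = (y1 - y2) * (y1 + y2)" by (simp add: power2_eq_square algebra_simps)
    ultimately have "p dvd (y1 - y2) * (y1 + y2)" by simp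
    hence "p dvd (y1 - y2) \<or> p dvd (y1 + y2)" using p(1) by (simp add: prime_dvd_mult_iff)
    thus ?thesis
    proof
      assume d: "p dvd (y1 - y2)"
      show ?thesis
      proof (rule ccontr)
        assume "y1 \<noteq> y2"
        hence "\<bar>p\<bar> \<le> \<bar>y1 - y2\<bar>" using d by (intro dvd_imp_le_int) auto
        thus False using that(1,2) p2 unfolding H_def by auto
      qed
    next
      assume d: "p dvd (y1 + y2)"
      show ?thesis
      proof (rule ccontr)
        assume "y1 \<noteq> y2"
        hence "y1 + y2 \<noteq> 0" using that(1,2) unfolding H_def by auto
        hence "\<bar>p\<bar> \<le> \<bar>y1 + y2\<bar>" using d by (intro dvd_imp_le_int) auto
        thus False using that(1,2) p2 unfolding H_def by auto
      qed
    qed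
  qed
  have injf: "inj_on f H"
  proof (rule inj_onI)
    fix y1 y2 assume y: "y1 \<in> H" "y2 \<in> H" "f y1 = f y2"
    hence "p dvd a * y1^2 - a * y2^2" unfolding f_def by (simp add: mod_eq_dvd_iff)
    hence "p dvd a * (y1^2 - y2^2)" by (simp add: right_diff_distrib)
    thus "y1 = y2" using sq y a by blast
  qed
  have injg: "inj_on g H"
  proof (rule inj_onI)
    fix y1 y2 assume y: "y1 \<in> H" "y2 \<in> H" "g y1 = g y2"
    hence "p dvd (n - b * y1^2) - (n - b * y2^2)" unfolding g_def by (simp add: mod_eq_dvd_iff)
    hence "p dvd b * (y2^2 - y1^2)" by (simp add: algebra_simps)
    thus "y1 = y2" using sq[of y2 y1 b] y b by auto
  qed
  have cH: "card H = nat (h + 1)" unfolding H_def by simp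
  have sub: "f ` H \<union> g ` H \<subseteq> {0..<p}" unfolding f_def g_def using pg by auto
  show ?thesis
  proof (rule ccontr)
    assume nt: "\<not> ?thesis"
    have "f ` H \<inter> g ` H = {}"
    proof (rule ccontr)
      assume "f ` H \<inter> g ` H \<noteq> {}"
      then obtain y z where "f y = g z" by auto
      hence "[a * y^2 = n - b * z^2] (mod p)" unfolding f_def g_def cong_def .
      hence "[a * y^2 + b * z^2 = n] (mod p)"
        by (simp add: cong_iff_dvd_diff algebra_simps)
      thus False using nt by blast
    qed
    hence "card (f ` H \<union> g ` H) = card (f ` H) + card (g ` H)"
      unfolding H_def by (intro card_Un_disjoint) auto
    also have "\<dots> = 2 * nat (h + 1)" using card_image[OF injf] card_image[OF injg] cH by simp
    finally have "card (f ` H \<union> g ` H) = 2 * nat (h + 1)" .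
    moreover have "card (f ` H \<union> g ` H) \<le> card {0..<p}" using sub by (intro card_mono) auto
    ultimately show False using p2 h0 by simp
  qed
qed



lemma lagr0:
  fixes x0 x1 x2 y0 y1 y2 a0 a1 a2 :: int
  shows "(x0*a0*x0 + x1*a1*x1 + x2*a2*x2) * (y0*a0*y0 + y1*a1*y1 + y2*a2*y2) - (x0*a0*y0 + x1*a1*y1 + x2*a2*y2)^2
    = a0 * a1 * (x0*y1 - x1*y0)^2 + a2 * (a0 * (x0*y2 - x2*y0)^2 + a1 * (x1*y2 - x2*y1)^2)"
  by (simp add: power2_eq_square algebra_simps)

lemma lagr:
  fixes T :: "nat \<Rightarrow> nat \<Rightarrow> int" and a :: "nat \<Rightarrow> int"
  shows "(\<Sum>l<3. T l 0 * a l * T l 0) * (\<Sum>l<3. T l 1 * a l * T l 1) - (\<Sum>l<3. T l 0 * a l * T l 1)^2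
    = a 0 * a 1 * (T 0 0 * T 1 1 - T 1 0 * T 0 1)^2 + a 2 * (a 0 * (T 0 0 * T 2 1 - T 2 0 * T 0 1)^2
      + a 1 * (T 1 0 * T 2 1 - T 2 0 * T 1 1)^2)"
  using lagr0[of "T 0 0" "a 0" "T 1 0" "a 1" "T 2 0" "a 2" "T 0 1" "T 1 1" "T 2 1"]
  by (simp add: eval_nat_numeral add.assoc)

lemma detprod0:
  fixes taa tab tac tba tbb tbc tca tcb tcc xa xb xc :: int
  shows "(taa*xa*taa + tba*xb*tba + tca*xc*tca)*((tab*xa*tab + tbb*xb*tbb + tcb*xc*tcb)*(tac*xa*tac + tbc*xb*tbc + tcc*xc*tcc) - (tab*xa*tac + tbb*xb*tbc + tcb*xc*tcc)*(tac*xa*tab + tbc*xb*tbb + tcc*xc*tcb)) - (taa*xa*tab + tba*xb*tbb + tca*xc*tcb)*((tab*xa*taa + tbb*xb*tba + tcb*xc*tca)*(tac*xa*tac + tbc*xb*tbc + tcc*xc*tcc) - (tab*xa*tac + tbb*xb*tbc + tcb*xc*tcc)*(tac*xa*taa + tbc*xb*tba + tcc*xc*tca)) + (taa*xa*tac + tba*xb*tbc + tca*xc*tcc)*((tab*xa*taa + tbb*xb*tba + tcb*xc*tca)*(tac*xa*tab + tbc*xb*tbb + tcc*xc*tcb) - (tab*xa*tab + tbb*xb*tbb + tcb*xc*tcb)*(tac*xa*taa + tbc*xb*tba + tcc*xc*tca)) = (taa*(tbb*tcc - tbc*tcb) - tab*(tba*tcc - tbc*tca) + tac*(tba*tcb -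 tbb*tca))^2 * (xa*xb*xc)"
  by (simp add: power2_eq_square algebra_simps)

lemma sum3: "(\<Sum>l<3. f l) = f 0 + f 1 + (f 2 :: int)" for f :: "nat \<Rightarrow> int"
  by (simp add: eval_nat_numeral)

lemma detprod:
  fixes T :: "nat \<Rightarrow> nat \<Rightarrow> int" and a :: "nat \<Rightarrow> int"
  shows "det3 (\<lambda>i j. \<Sum>l<3. T l i * a l * T l j) = (det3 T)^2 * (a 0 * a 1 * a 2)"
  unfolding det3_def sum3 by (rule detprod0)

lemma det3_cong:
  assumes "\<And>i j. i < 3 \<Longrightarrow> j < 3 \<Longrightarrow> [M i j = N i j] (mod q)"
  shows "[det3 M = det3 N] (mod q)"
  unfolding det3_def by (intro cong_add cong_diff cong_mult) (auto intro: assms)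



lemma iso_facts:
  fixes p a1 a2 a3 :: int
  assumes p: "prime p" "p > 3" and D: "nonsquare_unit p \<Delta>" and E: "padic_unit p \<epsilon>"
    and I: "zp_isometric3 p (\<lambda>i. zp_of_int p ([a1, a2, a3] ! i)) (\<lambda>i k. [1, - \<Delta> k, p * \<epsilon> k] ! i)"
  shows "(p dvd a3 \<and> \<not> p dvd a1 \<and> \<not> p dvd a2 \<and> \<not> p^2 dvd a3 \<and>
           (\<forall>x y. [a1 * x^2 + a2 * y^2 = 0] (mod p) \<longrightarrow> p dvd x \<and> p dvd y))
       \<or> (p dvd a1 \<and> \<not> p dvd a2 \<and> \<not> p dvd a3)
       \<or> (p dvd a2 \<and> \<not> p dvd a1 \<and> \<not> p dvd a3)"
proof -
  have odd: "odd p" using p prime_odd_int by auto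
  have p0: "p \<noteq> 0" using p by simp
  have Dn: "\<not> p dvd \<Delta> 1" "\<And>r. \<not> [r^2 = \<Delta> 1] (mod p)" using nsq[OF p(1) odd D] by auto
  have Dp: "padic p \<Delta>" using D unfolding nonsquare_unit_def padic_unit_def by auto
  have Ep: "padic p \<epsilon>" "\<not> p dvd \<epsilon> 1" using E unfolding padic_unit_def by auto
  obtain T where Tp: "\<forall>i<3. \<forall>j<3. padic p (T i j)" and Td: "\<not> p dvd det3 (\<lambda>i j. T i j 1)"
    and TB: "\<forall>i<3. \<forall>j<3. \<forall>k. [(\<Sum>l<3. T l i k * zp_of_int p ([a1, a2, a3] ! l) k * T l j k)
        = (if i = j then [1, - \<Delta> k, p * \<epsilon> k] ! i else 0)] (mod p ^ k)"
    using I unfolding zp_isometric3_def by blast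
  define av where "av = (\<lambda>l::nat. [a1, a2, a3] ! l)"
  define B where "B = (\<lambda>k i j. \<Sum>l<3. T l i k * av l * T l j k)"
  have TB': "[B k i j = (if i = j then [1, - \<Delta> k, p * \<epsilon> k] ! i else 0)] (mod p ^ k)"
    if "i < 3" "j < 3" for i j k
  proof -
    have "[B k i j = (\<Sum>l<3. T l i k * zp_of_int p ([a1, a2, a3] ! l) k * T l j k)] (mod p ^ k)"
      unfolding B_def av_def zp_of_int_def
      by (intro cong_sum cong_mult cong_refl) (simp add: cong_def)
    thus ?thesis using TB that cong_trans by blast
  qed
  define D2 where "D2 = det3 (\<lambda>i j. T i j 2)"
  have "[det3 (B 2) = det3 (\<lambda>i j. if i = j then [1, - \<Delta> 2, p * \<epsilon> 2] ! i else 0)] (mod p^2)"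
    by (rule det3_cong) (use TB' in blast)
  moreover have "det3 (\<lambda>i j. if i = j then [1, - \<Delta> 2, p * \<epsilon> 2] ! i else 0) = - (\<Delta> 2 * (p * \<epsilon> 2))"
    by (simp add: det3_def)
  moreover have "det3 (B 2) = D2^2 * (a1 * a2 * a3)"
    unfolding B_def D2_def using detprod[of "\<lambda>i j. T i j 2" av] by (simp add: av_def)
  ultimately have key: "[D2^2 * (a1 * a2 * a3) = - (\<Delta> 2 * (p * \<epsilon> 2))] (mod p^2)" by simp
  have "[D2 = det3 (\<lambda>i j. T i j 1)] (mod p)"
    unfolding D2_def
  proof (rule det3_cong)
    fix i j :: nat assume "i < 3" "j < 3"
    hence "padic p (T i j)" using Tp by blast
    from padic_cong[OF this, of 1] show "[T i j 2 = T i j 1] (mod p)" by (simp add: numeral_2_eq_2)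
  qed
  hence D2n: "\<not> p dvd D2" using Td cong_dvd_iff by blast
  have "[D2^2 * (a1 * a2 * a3) = - (\<Delta> 2 * (p * \<epsilon> 2))] (mod p)"
    using key by (rule cong_dvd_modulus) simp
  moreover have "p dvd - (\<Delta> 2 * (p * \<epsilon> 2))" by simp
  ultimately have "p dvd D2^2 * (a1 * a2 * a3)" using cong_dvd_iff by blast
  hence P1: "p dvd a1 * a2 * a3" using D2n p(1) by (simp add: prime_dvd_mult_iff prime_dvd_power_iff)
  have P2: "\<not> p^2 dvd a1 * a2 * a3"
  proof
    assume "p^2 dvd a1 * a2 * a3"
    hence "p^2 dvd D2^2 * (a1 * a2 * a3)" by simp
    hence "p^2 dvd - (\<Delta> 2 * (p * \<epsilon> 2))" using key cong_dvd_iff by blast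
    hence "p * p dvd p * (\<Delta> 2 * \<epsilon> 2)" by (simp add: power2_eq_square algebra_simps)
    hence "p dvd \<Delta> 2 * \<epsilon> 2" using p0 by simp
    hence "p dvd \<Delta> 2 \<or> p dvd \<epsilon> 2" using p(1) by (simp add: prime_dvd_mult_iff)
    moreover have "[\<Delta> 2 = \<Delta> 1] (mod p)" using padic_cong[OF Dp, of 1] by (simp add: numeral_2_eq_2)
    moreover have "[\<epsilon> 2 = \<epsilon> 1] (mod p)" using padic_cong[OF Ep(1), of 1] by (simp add: numeral_2_eq_2)
    ultimately show False using Dn(1) Ep(2) cong_dvd_iff by blast
  qed
  have pp: "p^2 = p * p" by (simp add: power2_eq_square)
  have pair: False if "p dvd x" "p dvd y" "a1 * a2 * a3 = x * y * z" for x y z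
  proof -
    have "p * p dvd x * y" using that(1,2) by (rule mult_dvd_mono)
    hence "p * p dvd x * y * z" by (rule dvd_mult2)
    thus False using P2 that(3) unfolding pp by simp
  qed
  have np12: "\<not> (p dvd a1 \<and> p dvd a2)" using pair[of a1 a2 a3] by auto
  have np13: "\<not> (p dvd a1 \<and> p dvd a3)" using pair[of a1 a3 a2] by (auto simp: algebra_simps)
  have np23: "\<not> (p dvd a2 \<and> p dvd a3)" using pair[of a2 a3 a1] by (auto simp: algebra_simps)
  have P1': "p dvd a1 \<or> p dvd a2 \<or> p dvd a3" using P1 p(1) by (simp add: prime_dvd_mult_iff)
  show ?thesis
  proof (cases "p dvd a3")
    case False
    then show ?thesis using P1' np12 by blast
  next
    case True
    have n1: "\<not> p dvd a1" using True np13 by blast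
    have n2: "\<not> p dvd a2" using True np23 by blast
    have n3: "\<not> p^2 dvd a3"
    proof
      assume "p^2 dvd a3"
      hence "p^2 dvd (a1 * a2) * a3" by (rule dvd_mult)
      thus False using P2 by simp
    qed
    define m where "m = T 0 0 1 * T 1 1 1 - T 1 0 1 * T 0 1 1"
    have b00: "[B 1 0 0 = 1] (mod p)" using TB'[of 0 0 1] by simp
    have b11: "[B 1 1 1 = - \<Delta> 1] (mod p)" using TB'[of 1 1 1] by simp
    have b01: "[B 1 0 1 = 0] (mod p)" using TB'[of 0 1 1] by simp
    have "[B 1 0 0 * B 1 1 1 - (B 1 0 1)^2 = 1 * (- \<Delta> 1) - 0^2] (mod p)"
      by (intro cong_diff cong_mult cong_pow b00 b11 b01)
    moreover have "B 1 0 0 * B 1 1 1 - (B 1 0 1)^2 = a1 * a2 * m^2 + a3 * (a1 * (T 0 0 1 * T 2 1 1 - T 2 0 1 * T 0 1 1)^2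
      + a2 * (T 1 0 1 * T 2 1 1 - T 2 0 1 * T 1 1 1)^2)"
      unfolding B_def m_def using lagr[of "\<lambda>i j. T i j 1" av] by (simp add: av_def)
    ultimately have "[a1 * a2 * m^2 + a3 * (a1 * (T 0 0 1 * T 2 1 1 - T 2 0 1 * T 0 1 1)^2
      + a2 * (T 1 0 1 * T 2 1 1 - T 2 0 1 * T 1 1 1)^2) = - \<Delta> 1] (mod p)" by simp
    hence "p dvd a1 * a2 * m^2 + a3 * (a1 * (T 0 0 1 * T 2 1 1 - T 2 0 1 * T 0 1 1)^2
      + a2 * (T 1 0 1 * T 2 1 1 - T 2 0 1 * T 1 1 1)^2) + \<Delta> 1" by (simp add: cong_iff_dvd_diff)
    moreover have "p dvd a3 * (a1 * (T 0 0 1 * T 2 1 1 - T 2 0 1 * T 0 1 1)^2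
      + a2 * (T 1 0 1 * T 2 1 1 - T 2 0 1 * T 1 1 1)^2)" using True by (rule dvd_mult2)
    ultimately have lg: "p dvd a1 * a2 * m^2 + \<Delta> 1"
      by (metis (no_types, lifting) add_diff_cancel_left' add_diff_cancel_right' dvd_diff diff_diff_eq2 add.commute)
    have aniso: "p dvd x \<and> p dvd y" if xy: "[a1 * x^2 + a2 * y^2 = 0] (mod p)" for x y
    proof (cases "p dvd x")
      case True
      hence "p dvd a1 * x^2" by (simp add: power2_eq_square)
      moreover have "p dvd a1 * x^2 + a2 * y^2" using xy by (simp add: cong_0_iff)
      ultimately have "p dvd a2 * y^2" by (simp add: dvd_add_right_iff)
      hence "p dvd y" using n2 p(1) by (simp add: prime_dvd_mult_iff prime_dvd_power_iff)
      with True show ?thesis by simp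
    next
      case False
      have "coprime x p" using False p(1) by (metis prime_imp_coprime coprime_commute)
      then obtain w where w: "[x * w = 1] (mod p)" using cong_solve_coprime_int by blast
      hence w': "p dvd x * w - 1" by (simp add: cong_iff_dvd_diff)
      have xy': "p dvd a1 * x^2 + a2 * y^2" using xy by (simp add: cong_0_iff)
      define r where "r = a2 * y * m * w"
      have id: "r^2 - \<Delta> 1 = a2 * m^2 * w^2 * (a1 * x^2 + a2 * y^2) - (a1 * a2 * m^2 + \<Delta> 1) * (x * w)^2
         + \<Delta> 1 * ((x * w - 1) * (x * w + 1))"
        unfolding r_def by (simp add: power2_eq_square algebra_simps)
      have d1: "p dvd a2 * m^2 * w^2 * (a1 * x^2 + a2 * y^2)" using xy' by (rule dvd_mult)
      have d2: "p dvd (a1 * a2 * m^2 + \<Delta> 1) * (x * w)^2" using lg by (rule dvd_mult2)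
      have d3: "p dvd \<Delta> 1 * ((x * w - 1) * (x * w + 1))" by (rule dvd_mult, rule dvd_mult2, rule w')
      have "p dvd r^2 - \<Delta> 1" unfolding id by (rule dvd_add[OF dvd_diff[OF d1 d2] d3])
      hence "[r^2 = \<Delta> 1] (mod p)" by (simp add: cong_iff_dvd_diff)
      with Dn(2) show ?thesis by blast
    qed
    show ?thesis using True n1 n2 n3 aniso by blast
  qed
qed



lemma mult_le1:
  assumes "prime p" "\<not> p^2 dvd (n::int)" shows "multiplicity p n \<le> 1"
proof -
  have "n \<noteq> 0" using assms(2) by auto
  hence "multiplicity p n < 2" by (intro multiplicity_lessI) (use assms prime_gt_1_int[of p] in \<open>simp_all add: not_prime_unit\<close>)
  thus ?thesis by simp
qed

lemma caseA:
  fixes p u a1 a2 a3 \<alpha>1 \<alpha>2 \<alpha>3 :: int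
  assumes p: "prime p" "p > 3" and u: "coprime u p"
    and a3: "p dvd a3" "\<not> p^2 dvd a3" and a12: "\<not> p dvd a1" "\<not> p dvd a2"
    and aniso: "\<forall>x y. [a1 * x^2 + a2 * y^2 = 0] (mod p) \<longrightarrow> p dvd x \<and> p dvd y"
  shows "\<exists>v::int. 0 < v \<and> v < p ^ 2 \<and>
     \<not> zp_represents p [a1, a2] (u * v + a1 * \<alpha>1 ^ 2 + a2 * \<alpha>2 ^ 2) \<and>
     zp_represents p [a1, a2, a3] (u * v + a1 * \<alpha>1 ^ 2 + a2 * \<alpha>2 ^ 2 + a3 * \<alpha>3 ^ 2) \<and>
     max (multiplicity p (u * v + a1 * \<alpha>1 ^ 2 + a2 * \<alpha>2 ^ 2))
         (multiplicity p (u * v + a1 * \<alpha>1 ^ 2 + a2 * \<alpha>2 ^ 2 + a3 * \<alpha>3 ^ 2)) \<le> 1"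
proof -
  have odd: "odd p" using p prime_odd_int by auto
  have pp: "p > 0" using p by simp
  have pp2: "p^2 = p * p" by (simp add: power2_eq_square)
  obtain a3' where a3': "a3 = p * a3'" using a3(1) by (auto elim: dvdE)
  have na3': "\<not> p dvd a3'"
  proof
    assume "p dvd a3'"
    hence "p * p dvd p * a3'" by simp
    thus False using a3(2) a3' pp2 by simp
  qed
  have np3: "\<not> p dvd 3"
  proof
    assume "p dvd 3" hence "p \<le> 3" by (simp add: zdvd_imp_le) thus False using p by simp
  qed
  have np2: "\<not> p dvd 2"
  proof
    assume "p dvd 2" hence "p \<le> 2" by (simp add: zdvd_imp_le) thus False using p by simp
  qed
  have np4: "\<not> p dvd 4"
  proof
    assume "p dvd 4" hence "p dvd 2 * 2" by simp
    hence "p dvd 2" using p(1) prime_dvd_mult_iff by blast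
    thus False using np2 by simp
  qed
  define c' where "c' = a3' * \<alpha>3^2"
  define S where "S = a1 * \<alpha>1^2 + a2 * \<alpha>2^2"
  have n4: "\<not> [a3' = 4 * a3'] (mod p)"
  proof
    assume "[a3' = 4 * a3'] (mod p)"
    hence "p dvd a3' - 4 * a3'" by (simp add: cong_iff_dvd_diff)
    hence "p dvd - (3 * a3')" by simp
    hence "p dvd 3 * a3'" by (simp only: dvd_minus_iff)
    thus False using np3 na3' p(1) by (simp add: prime_dvd_mult_iff)
  qed
  obtain m r where mr: "a3' * r^2 = m" "\<not> p dvd r" "\<not> p dvd m" "\<not> [m = c'] (mod p)"
  proof (cases "[a3' = c'] (mod p)")
    case True
    hence "\<not> [4 * a3' = c'] (mod p)" using n4 by (metis cong_sym cong_trans)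
    moreover have "\<not> p dvd 4 * a3'" using np4 na3' p(1) by (simp add: prime_dvd_mult_iff)
    ultimately show ?thesis using that[of 2 "4 * a3'"] np2 by simp
  next
    case False
    have "\<bar>p\<bar> \<noteq> 1" using p(1) prime_gt_1_int by fastforce
    then show ?thesis using that[of 1 a3'] na3' False by simp
  qed
  define t where "t = m - c'"
  have nt: "\<not> p dvd t" using mr(4) unfolding t_def by (simp add: cong_iff_dvd_diff)
  have "coprime u (p^2)" using u by simp
  then obtain wu where wu: "[u * wu = 1] (mod p^2)" using cong_solve_coprime_int by blast
  define v where "v = (wu * (p * t - S)) mod p^2"
  have "[u * v = u * (wu * (p * t - S))] (mod p^2)" unfolding v_def
    by (intro cong_mult cong_refl) (simp add: cong_def)
  also have "u * (wu * (p * t - S)) = (u * wu) * (p * t - S)" by (simp add: mult.assoc)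
  also have "[\<dots> = 1 * (p * t - S)] (mod p^2)" by (intro cong_mult wu cong_refl)
  finally have uv: "[u * v = p * t - S] (mod p^2)" by simp
  define n2 where "n2 = u * v + S"
  define n3 where "n3 = n2 + a3 * \<alpha>3^2"
  have e2: "p^2 dvd n2 - p * t" using uv unfolding n2_def by (simp add: cong_iff_dvd_diff algebra_simps)
  have e3: "n3 - p * m = n2 - p * t" unfolding n3_def t_def c'_def a3' by (simp add: algebra_simps)
  have pdp2: "p dvd p^2" by (simp add: pp2)
  have p_n2: "p dvd n2"
  proof -
    have "p dvd n2 - p * t" using e2 pdp2 dvd_trans by blast
    hence "p dvd (n2 - p * t) + p * t" by (intro dvd_add) simp_all
    thus ?thesis by simp
  qed
  have np2_n2: "\<not> p^2 dvd n2"
  proof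
    assume h: "p^2 dvd n2"
    have "p^2 dvd n2 - (n2 - p * t)" using dvd_diff[OF h e2] .
    hence "p * p dvd p * t" by (simp add: pp2)
    hence "p dvd t" using pp by simp
    thus False using nt by simp
  qed
  have np2_n3: "\<not> p^2 dvd n3"
  proof
    assume h: "p^2 dvd n3"
    have "p^2 dvd n3 - (n3 - p * m)" using dvd_diff[OF h e2[folded e3]] .
    hence "p * p dvd p * m" by (simp add: pp2)
    hence "p dvd m" using pp by simp
    thus False using mr(3) by simp
  qed
  have v0: "0 \<le> v" "v < p^2" unfolding v_def using pp by simp_all
  have vnz: "v \<noteq> 0"
  proof
    assume "v = 0"
    hence "p^2 dvd p * t - S" using uv by (simp add: cong_iff_dvd_diff dvd_diff_commute)
    hence "p dvd p * t - S" using pdp2 dvd_trans by blast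
    hence "p dvd p * t - (p * t - S)" using dvd_diff[of p "p * t" "p * t - S"] by simp
    hence "p dvd S" by simp
    hence "[a1 * \<alpha>1^2 + a2 * \<alpha>2^2 = 0] (mod p)" unfolding S_def by (simp add: cong_0_iff)
    hence "p dvd \<alpha>1 \<and> p dvd \<alpha>2" using aniso by blast
    hence "p^2 dvd \<alpha>1^2" "p^2 dvd \<alpha>2^2" using dvd_power_same by blast+
    hence "p^2 dvd a1 * \<alpha>1^2" "p^2 dvd a2 * \<alpha>2^2" using dvd_mult by blast+
    hence "p^2 dvd S" unfolding S_def by (rule dvd_add)
    hence "p^2 dvd (p * t - S) + S" using \<open>p^2 dvd p * t - S\<close> by (intro dvd_add)
    hence "p * p dvd p * t" by (simp add: pp2)
    hence "p dvd t" using pp by simp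
    thus False using nt by simp
  qed
  have nrep: "\<not> zp_represents p [a1, a2] n2"
  proof
    assume "zp_represents p [a1, a2] n2"
    then obtain x y where xy: "\<forall>k. [a1 * (x k)^2 + a2 * (y k)^2 = n2] (mod p ^ k)"
      unfolding rep2_iff by blast
    have c2: "[a1 * (x 2)^2 + a2 * (y 2)^2 = n2] (mod p^2)" using xy by blast
    hence "[a1 * (x 2)^2 + a2 * (y 2)^2 = n2] (mod p)" using pdp2 by (rule cong_dvd_modulus)
    hence "p dvd a1 * (x 2)^2 + a2 * (y 2)^2" using p_n2 cong_dvd_iff by blast
    hence "[a1 * (x 2)^2 + a2 * (y 2)^2 = 0] (mod p)" by (simp add: cong_0_iff)
    hence "p dvd x 2 \<and> p dvd y 2" using aniso by blast
    hence "p^2 dvd (x 2)^2" "p^2 dvd (y 2)^2" using dvd_power_same by blast+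
    hence "p^2 dvd a1 * (x 2)^2" "p^2 dvd a2 * (y 2)^2" using dvd_mult by blast+
    hence "p^2 dvd a1 * (x 2)^2 + a2 * (y 2)^2" by (rule dvd_add)
    hence "p^2 dvd n2" using c2 cong_dvd_iff by blast
    thus False using np2_n2 by simp
  qed
  have rep: "zp_represents p [a1, a2, a3] n3"
  proof -
    have "p dvd n2 - p * t" by (rule dvd_trans[OF pdp2 e2])
    hence "p dvd n3 - p * m" by (simp add: e3)
    hence "p dvd (n3 - p * m) + p * m" by (rule dvd_add) simp
    hence "p dvd n3" by simp
    then obtain n3' where n3': "n3 = p * n3'" by (auto elim: dvdE)
    have "p * (n3' - m) = n2 - p * t" using e3 n3' by (simp add: algebra_simps)
    hence "p * p dvd p * (n3' - m)" using e2 by (simp add: pp2)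
    hence "p dvd n3' - m" using pp by simp
    hence cm: "[a3' * r^2 = n3'] (mod p)" using mr(1) by (simp add: cong_iff_dvd_diff dvd_diff_commute)
    obtain z where z: "padic p z" "\<forall>k. [a3' * (z k)^2 = n3'] (mod p ^ k)"
      using hensel[of p a3' r "\<lambda>k. n3'"] p(1) odd na3' mr(2) cm by auto
    have "[a1 * 0^2 + a2 * 0^2 + a3 * (z k)^2 = n3] (mod p ^ k)" for k
    proof -
      have "p^k dvd a3' * (z k)^2 - n3'" using z(2) by (simp add: cong_iff_dvd_diff)
      hence "p^k dvd p * (a3' * (z k)^2 - n3')" by (rule dvd_mult)
      thus ?thesis unfolding a3' n3' by (simp add: cong_iff_dvd_diff algebra_simps)
    qed
    thus ?thesis unfolding rep3_iff using z(1) padic_zero[OF pp] by blast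
  qed
  show ?thesis
    apply (rule exI[of _ v])
    using v0 vnz nrep rep mult_le1[OF p(1) np2_n2] mult_le1[OF p(1) np2_n3]
    unfolding n3_def n2_def S_def by (simp add: add.assoc)
qed



lemma caseB:
  fixes p u a1 a2 a3 \<alpha>1 \<alpha>2 \<alpha>3 g :: int
  assumes p: "prime p" "p > 3" and u: "coprime u p"
    and a1: "p dvd a1" and a23: "\<not> p dvd a2" "\<not> p dvd a3"
    and g: "\<And>r. \<not> [r^2 = g] (mod p)"
  shows "\<exists>v::int. 0 < v \<and> v < p ^ 2 \<and>
     \<not> zp_represents p [a1, a2] (u * v + a1 * \<alpha>1 ^ 2 + a2 * \<alpha>2 ^ 2) \<and>
     zp_represents p [a1, a2, a3] (u * v + a1 * \<alpha>1 ^ 2 + a2 * \<alpha>2 ^ 2 + a3 * \<alpha>3 ^ 2) \<and>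
     max (multiplicity p (u * v + a1 * \<alpha>1 ^ 2 + a2 * \<alpha>2 ^ 2))
         (multiplicity p (u * v + a1 * \<alpha>1 ^ 2 + a2 * \<alpha>2 ^ 2 + a3 * \<alpha>3 ^ 2)) \<le> 1"
proof -
  have odd: "odd p" using p prime_odd_int by auto
  have pp: "p > 0" using p by simp
  have np3: "\<not> p dvd 3"
  proof
    assume "p dvd 3" hence "p \<le> 3" by (simp add: zdvd_imp_le) thus False using p by simp
  qed
  have ng: "\<not> p dvd g"
  proof
    assume "p dvd g" hence "[g = 0] (mod p)" by (simp add: cong_0_iff)
    hence "[0^2 = g] (mod p)" using cong_sym by simp
    thus False using g by blast
  qed
  have "coprime a2 p" using a23(1) p(1) by (metis prime_imp_coprime coprime_commute)
  then obtain w2 where w2: "[a2 * w2 = 1] (mod p)" using cong_solve_coprime_int by blast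
  define h where "h = (p + 1) div 2"
  have h2: "2 * h = p + 1" unfolding h_def using odd by presburger
  have h1: "[(2 * h)^2 = 1] (mod p)" unfolding h2
  proof -
    have "[p + 1 = 0 + 1] (mod p)" by (intro cong_add cong_refl) (simp add: cong_0_iff)
    hence "[(p + 1)^2 = (0 + 1)^2] (mod p)" by (rule cong_pow)
    thus "[(p + 1)^2 = 1] (mod p)" by simp
  qed
  define c where "c = a3 * \<alpha>3^2"
  define S where "S = a1 * \<alpha>1^2 + a2 * \<alpha>2^2"
  define t1 where "t1 = w2 * g"
  define t2 where "t2 = w2 * (4 * g)"
  have at1: "[a2 * t1 = g] (mod p)"
  proof -
    have "[(a2 * w2) * g = 1 * g] (mod p)" by (intro cong_mult w2 cong_refl)
    thus ?thesis unfolding t1_def by (simp add: mult.assoc)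
  qed
  have at2: "[a2 * t2 = 4 * g] (mod p)"
  proof -
    have "[(a2 * w2) * (4 * g) = 1 * (4 * g)] (mod p)" by (intro cong_mult w2 cong_refl)
    thus ?thesis unfolding t2_def by (simp add: mult.assoc)
  qed
  have t12: "\<not> [t1 = t2] (mod p)"
  proof
    assume "[t1 = t2] (mod p)"
    hence "[a2 * t1 = a2 * t2] (mod p)" by (intro cong_mult cong_refl)
    hence "[g = 4 * g] (mod p)" using cong_trans[OF cong_trans[OF cong_sym[OF at1]] at2] by blast
    hence "p dvd 4 * g - g" by (simp add: cong_iff_dvd_diff dvd_diff_commute)
    hence "p dvd 3 * g" by simp
    thus False using np3 ng p(1) by (simp add: prime_dvd_mult_iff)
  qed
  have nqr1: "\<not> [a2 * y^2 = t1] (mod p)" for y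
  proof
    assume "[a2 * y^2 = t1] (mod p)"
    hence "[a2 * (a2 * y^2) = a2 * t1] (mod p)" by (intro cong_mult cong_refl)
    moreover have "(a2 * y)^2 = a2 * (a2 * y^2)" by (simp add: power2_eq_square)
    ultimately have "[(a2 * y)^2 = g] (mod p)" using cong_trans[OF _ at1] by simp
    thus False using g by blast
  qed
  have nqr2: "\<not> [a2 * y^2 = t2] (mod p)" for y
  proof
    assume "[a2 * y^2 = t2] (mod p)"
    hence "[a2 * (a2 * y^2) = a2 * t2] (mod p)" by (intro cong_mult cong_refl)
    moreover have "(a2 * y)^2 = a2 * (a2 * y^2)" by (simp add: power2_eq_square)
    ultimately have "[(a2 * y)^2 = 4 * g] (mod p)" using cong_trans[OF _ at2] by simp
    hence "[(a2 * y)^2 * h^2 = 4 * g * h^2] (mod p)" by (intro cong_mult cong_refl)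
    moreover have "4 * g * h^2 = g * (2 * h)^2" by (simp add: power2_eq_square)
    moreover have "[g * (2 * h)^2 = g * 1] (mod p)" by (intro cong_mult cong_refl h1)
    ultimately have "[(a2 * y)^2 * h^2 = g * 1] (mod p)" using cong_trans by simp
    moreover have "(a2 * y * h)^2 = (a2 * y)^2 * h^2" by (simp add: power_mult_distrib)
    ultimately have "[(a2 * y * h)^2 = g] (mod p)" by simp
    thus False using g by blast
  qed
  obtain t where t: "\<And>y. \<not> [a2 * y^2 = t] (mod p)" "\<not> [t = - c] (mod p)"
  proof (cases "[t1 = - c] (mod p)")
    case True
    have "\<not> [t2 = - c] (mod p)"
    proof
      assume "[t2 = - c] (mod p)"
      hence "[t1 = t2] (mod p)" using cong_trans[OF True cong_sym] by blast
      thus False using t12 by blast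
    qed
    thus ?thesis using that nqr2 by blast
  next
    case False
    thus ?thesis using that nqr1 by blast
  qed
  have t0: "\<not> p dvd t"
  proof
    assume "p dvd t" hence "[t = 0] (mod p)" by (simp add: cong_0_iff)
    hence "[a2 * 0^2 = t] (mod p)" using cong_sym by simp
    thus False using t(1) by blast
  qed
  obtain wu where wu: "[u * wu = 1] (mod p)" using u cong_solve_coprime_int by blast
  define v0 where "v0 = (wu * (t - S)) mod p"
  define v where "v = (if v0 = 0 then p else v0)"
  have vv0: "[v = v0] (mod p)" unfolding v_def by (simp add: cong_def v0_def)
  have "[u * v = u * (wu * (t - S))] (mod p)"
    using vv0 unfolding v0_def by (intro cong_mult cong_refl) (simp add: cong_def)
  also have "u * (wu * (t - S)) = (u * wu) * (t - S)" by (simp add: mult.assoc)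
  also have "[\<dots> = 1 * (t - S)] (mod p)" by (intro cong_mult wu cong_refl)
  finally have uv: "[u * v = t - S] (mod p)" by simp
  have vb: "0 < v" "v < p^2"
  proof -
    have "0 \<le> v0" "v0 < p" unfolding v0_def using pp by simp_all
    moreover have "p < p^2" using p by (simp add: power2_eq_square)
    ultimately show "0 < v" "v < p^2" unfolding v_def by auto
  qed
  define n2 where "n2 = u * v + S"
  define n3 where "n3 = n2 + c"
  have n2t: "[n2 = t] (mod p)" using uv unfolding n2_def
    by (simp add: cong_iff_dvd_diff algebra_simps)
  have n3t: "[n3 = t + c] (mod p)" unfolding n3_def using n2t by (intro cong_add cong_refl)
  have nd2: "\<not> p dvd n2" using n2t t0 cong_dvd_iff by blast
  have nd3: "\<not> p dvd n3"
  proof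
    assume "p dvd n3"
    hence "p dvd t + c" using n3t cong_dvd_iff by blast
    hence "[t = - c] (mod p)" by (simp add: cong_iff_dvd_diff)
    thus False using t(2) by blast
  qed
  have nrep: "\<not> zp_represents p [a1, a2] n2"
  proof
    assume "zp_represents p [a1, a2] n2"
    then obtain x y where xy: "\<forall>k. [a1 * (x k)^2 + a2 * (y k)^2 = n2] (mod p ^ k)"
      unfolding rep2_iff by blast
    have c1: "[a1 * (x 1)^2 + a2 * (y 1)^2 = n2] (mod p)" using xy[rule_format, of 1] by simp
    have "[a1 * (x 1)^2 = 0] (mod p)" using a1 by (simp add: cong_0_iff)
    hence "[a1 * (x 1)^2 + a2 * (y 1)^2 = 0 + a2 * (y 1)^2] (mod p)" by (intro cong_add cong_refl)
    hence "[0 + a2 * (y 1)^2 = t] (mod p)" using cong_trans[OF cong_trans[OF cong_sym c1] n2t] by blast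
    hence "[a2 * (y 1)^2 = t] (mod p)" by simp
    thus False using t(1) by blast
  qed
  have rep: "zp_represents p [a1, a2, a3] n3"
  proof -
    obtain y0 z0 where yz: "[a2 * y0^2 + a3 * z0^2 = n3] (mod p)"
      using binary[OF p(1) odd a23] by blast
    have cc: "[(c0 mod p^k)^2 = c0^2] (mod p^k)" for c0 k by (intro cong_pow) (simp add: cong_def)
    show ?thesis
    proof (cases "p dvd z0")
      case False
      have "[a3 * z0^2 = n3 - a2 * y0^2] (mod p)" using yz by (simp add: cong_iff_dvd_diff algebra_simps)
      then obtain z where z: "padic p z" "\<forall>k. [a3 * (z k)^2 = n3 - a2 * y0^2] (mod p ^ k)"
        using hensel[of p a3 z0 "\<lambda>k. n3 - a2 * y0^2"] p(1) odd a23(2) False by auto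
      have "[a1 * 0^2 + a2 * (y0 mod p^k)^2 + a3 * (z k)^2 = n3] (mod p ^ k)" for k
      proof -
        have "[a2 * (y0 mod p^k)^2 + a3 * (z k)^2 = a2 * y0^2 + (n3 - a2 * y0^2)] (mod p ^ k)"
          using z(2) cc by (intro cong_add cong_mult cong_refl) auto
        thus ?thesis by simp
      qed
      thus ?thesis unfolding rep3_iff using z(1) padic_zero[OF pp] padic_const[OF pp, of y0] by blast
    next
      case True
      have "p dvd a3 * z0^2" using True by (simp add: power2_eq_square)
      hence "[a2 * y0^2 + a3 * z0^2 = a2 * y0^2 + 0] (mod p)" by (intro cong_add cong_refl) (simp add: cong_0_iff)
      hence "[a2 * y0^2 + 0 = n3] (mod p)" using cong_trans[OF cong_sym yz] by blast
      hence "[a2 * y0^2 = n3] (mod p)" by simp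
      moreover have "[a2 * y0^2 = n3 - a3 * z0^2] (mod p)" using yz by (simp add: cong_iff_dvd_diff algebra_simps)
      moreover have "\<not> p dvd y0"
      proof
        assume "p dvd y0" hence "p dvd a2 * y0^2" by (simp add: power2_eq_square)
        thus False using calculation(1) nd3 cong_dvd_iff by blast
      qed
      ultimately obtain y where y: "padic p y" "\<forall>k. [a2 * (y k)^2 = n3 - a3 * z0^2] (mod p ^ k)"
        using hensel[of p a2 y0 "\<lambda>k. n3 - a3 * z0^2"] p(1) odd a23(1) by auto
      have "[a1 * 0^2 + a2 * (y k)^2 + a3 * (z0 mod p^k)^2 = n3] (mod p ^ k)" for k
      proof -
        have "[a2 * (y k)^2 + a3 * (z0 mod p^k)^2 = (n3 - a3 * z0^2) + a3 * z0^2] (mod p ^ k)"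
          using y(2) cc by (intro cong_add cong_mult cong_refl) auto
        thus ?thesis by simp
      qed
      thus ?thesis unfolding rep3_iff using y(1) padic_zero[OF pp] padic_const[OF pp, of z0] by blast
    qed
  qed
  have m2: "multiplicity p n2 = 0" "multiplicity p n3 = 0"
    using nd2 nd3 by (simp_all add: not_dvd_imp_multiplicity_0)
  show ?thesis
    apply (rule exI[of _ v])
    using vb nrep rep m2 unfolding n3_def n2_def S_def c_def by (simp add: add.assoc)
qed



lemma rep2_swap: "zp_represents p [a, b] n \<Longrightarrow> zp_represents p [b, a] n"
  unfolding rep2_iff by (metis add.commute)

lemma rep3_swap: "zp_represents p [a, b, c] n \<Longrightarrow> zp_represents p [b, a, c] n"
  unfolding rep3_iff by (metis add.commute)

theorem lemma2p4:
  fixes p u a1 a2 a3 \<alpha>1 \<alpha>2 \<alpha>3 :: int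
  assumes "prime p" and "p > 3"
    and "u > 0" and "coprime u p"
    and "a1 > 0" and "a2 > 0" and "a3 > 0"
    and "\<alpha>1 > 0" and "\<alpha>2 > 0" and "\<alpha>3 > 0"
    and "\<exists>\<Delta> \<epsilon>. nonsquare_unit p \<Delta> \<and> padic_unit p \<epsilon> \<and>
           zp_isometric3 p
             (\<lambda>i. zp_of_int p ([a1, a2, a3] ! i))
             (\<lambda>i k. [1, - \<Delta> k, p * \<epsilon> k] ! i)"
  shows "\<exists>v::int. 0 < v \<and> v < p ^ 2 \<and>
     \<not> zp_represents p [a1, a2] (u * v + a1 * \<alpha>1 ^ 2 + a2 * \<alpha>2 ^ 2) \<and>
     zp_represents p [a1, a2, a3] (u * v + a1 * \<alpha>1 ^ 2 + a2 * \<alpha>2 ^ 2 + a3 * \<alpha>3 ^ 2) \<and>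
     max (multiplicity p (u * v + a1 * \<alpha>1 ^ 2 + a2 * \<alpha>2 ^ 2))
         (multiplicity p (u * v + a1 * \<alpha>1 ^ 2 + a2 * \<alpha>2 ^ 2 + a3 * \<alpha>3 ^ 2)) \<le> 1"
proof -
  obtain \<Delta> \<epsilon> where D: "nonsquare_unit p \<Delta>" and E: "padic_unit p \<epsilon>"
    and I: "zp_isometric3 p (\<lambda>i. zp_of_int p ([a1, a2, a3] ! i)) (\<lambda>i k. [1, - \<Delta> k, p * \<epsilon> k] ! i)"
    using assms(11) by blast
  have odd: "odd p" using assms(1,2) prime_odd_int by auto
  have g: "\<And>r. \<not> [r^2 = \<Delta> 1] (mod p)" using nsq[OF assms(1) odd D] by blast
  note F = iso_facts[OF assms(1,2) D E I]
  show ?thesis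
  proof (cases "p dvd a3 \<and> \<not> p dvd a1 \<and> \<not> p dvd a2 \<and> \<not> p^2 dvd a3 \<and>
           (\<forall>x y. [a1 * x^2 + a2 * y^2 = 0] (mod p) \<longrightarrow> p dvd x \<and> p dvd y)")
    case True
    then show ?thesis using caseA[OF assms(1,2,4), of a3 a1 a2 \<alpha>1 \<alpha>2 \<alpha>3] by blast
  next
    case False
    hence F': "(p dvd a1 \<and> \<not> p dvd a2 \<and> \<not> p dvd a3) \<or> (p dvd a2 \<and> \<not> p dvd a1 \<and> \<not> p dvd a3)"
      using F by blast
    show ?thesis
    proof (cases "p dvd a1")
      case True
      with F' have "\<not> p dvd a2" "\<not> p dvd a3" by auto
      then show ?thesis using caseB[OF assms(1,2,4) True _ _ g, of a2 a3 \<alpha>1 \<alpha>2 \<alpha>3] by blast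
    next
      case False
      with F' have h: "p dvd a2" "\<not> p dvd a1" "\<not> p dvd a3" by auto
      obtain v where v: "0 < v" "v < p ^ 2"
        "\<not> zp_represents p [a2, a1] (u * v + a2 * \<alpha>2 ^ 2 + a1 * \<alpha>1 ^ 2)"
        "zp_represents p [a2, a1, a3] (u * v + a2 * \<alpha>2 ^ 2 + a1 * \<alpha>1 ^ 2 + a3 * \<alpha>3 ^ 2)"
        "max (multiplicity p (u * v + a2 * \<alpha>2 ^ 2 + a1 * \<alpha>1 ^ 2))
          (multiplicity p (u * v + a2 * \<alpha>2 ^ 2 + a1 * \<alpha>1 ^ 2 + a3 * \<alpha>3 ^ 2)) \<le> 1"
        using caseB[OF assms(1,2,4) h g, of \<alpha>2 \<alpha>1 \<alpha>3] by blast
      have e: "u * v + a2 * \<alpha>2 ^ 2 + a1 * \<alpha>1 ^ 2 = u * v + a1 * \<alpha>1 ^ 2 + a2 * \<alpha>2 ^ 2" by simp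
      have "\<not> zp_represents p [a1, a2] (u * v + a1 * \<alpha>1 ^ 2 + a2 * \<alpha>2 ^ 2)"
        using v(3) rep2_swap unfolding e by blast
      moreover have "zp_represents p [a1, a2, a3] (u * v + a1 * \<alpha>1 ^ 2 + a2 * \<alpha>2 ^ 2 + a3 * \<alpha>3 ^ 2)"
        using rep3_swap[OF v(4)] unfolding e .
      ultimately show ?thesis using v(1,2,5) unfolding e by blast
    qed
  qed
qed


end
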